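(* For $0<x<1$, as power series in $t$ (convergent for $t$ near $0$), \[ \sum_{n=0}^\infty p_{n-1}(x)\frac{t^n}{n!} = \frac{e^{(1-x)t}\left(\arcsin\!\big(x^{1/2}e^{(1-x)t}\big) - \arcsin\!\big(x^{1/2}\big)\right)}{x^{1/2}\left(1-xe^{2(1-x)t}\right)^{1/2}}. \]
   Context: Define polynomial sequences $(p_k(x))_{k\ge -1}$ and $(q_k(x))_{k\ge -1}$ by $p_{-1}(x)=0$, $q_{-1}(x)=1$ and, for $k\ge -1$, $p_{k+1}(x) = 2(kx+1)p_k(x) + 2x(1-x)p_k'(x) + q_k(x)$, $q_{k+1}(x) = (2(k+1)x+1)q_k(x) + 2x(1-x)q_k'(x)$. *)

theory Defs
  imports "HOL-Analysis.Analysis" "HOL-Computational_Algebra.Polynomial"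
begin

text \<open>Shifted indexing: pq n = (p_{n-1}, q_{n-1}), so that pq 0 = (p_{-1}, q_{-1}) = (0, 1).
  The recurrence with k = n - 1 (k ranges over k >= -1):
  p_{k+1} = 2(kx+1) p_k + 2x(1-x) p_k' + q_k,
  q_{k+1} = (2(k+1)x+1) q_k + 2x(1-x) q_k'.\<close>

fun pq :: "nat \<Rightarrow> real poly \<times> real poly" where
  "pq 0 = (0, 1)"
| "pq (Suc n) =
     (let (p, q) = pq n in
       ([:2, 2 * (real n - 1):] * p + [:0, 2, -2:] * pderiv p + q,
        [:1, 2 * real n:] * q + [:0, 2, -2:] * pderiv q))"

definition pshift :: "nat \<Rightarrow> real poly" where "pshift n = fst (pq n)"
definition qshift :: "nat \<Rightarrow> real poly" where "qshift n = snd (pq n)"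

end

theory Submission
  imports Defs "HOL-Complex_Analysis.Complex_Analysis"
begin


definition mp :: "real poly \<Rightarrow> complex poly" where "mp p = map_poly of_real p"

lemma mp_add: "mp (p + q) = mp p + mp q"
  unfolding mp_def by (rule poly_eqI) (simp add: coeff_map_poly)
lemma mp_mult: "mp (p * q) = mp p * mp q"
  unfolding mp_def by (rule poly_eqI) (simp add: coeff_map_poly coeff_mult)
lemma mp_pderiv: "mp (pderiv p) = pderiv (mp p)"
  unfolding mp_def by (rule poly_eqI) (simp add: coeff_map_poly coeff_pderiv)
lemma mp_pCons: "mp (pCons a p) = pCons (of_real a) (mp p)"
  unfolding mp_def by (simp add: map_poly_pCons)
lemma mp_smult: "mp (smult c p) = smult (of_real c) (mp p)"
  unfolding mp_def by (rule poly_eqI) (simp add: coeff_map_poly)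
lemma mp_uminus: "mp (- p) = - mp p"
  unfolding mp_def by (rule poly_eqI) (simp add: coeff_map_poly)
lemma mp_0[simp]: "mp 0 = 0" unfolding mp_def by simp
lemma mp_1[simp]: "mp 1 = 1" unfolding mp_def by simp
lemma poly_mp_real: "poly (mp p) (of_real x) = of_real (poly p x)"
  unfolding mp_def by (induction p) (auto simp: map_poly_pCons)

lemma pshift_Suc: "pshift (Suc n) = [:2, 2 * (real n - 1):] * pshift n + [:0, 2, -2:] * pderiv (pshift n) + qshift n"
  by (simp add: pshift_def qshift_def split: prod.split)
lemma qshift_Suc: "qshift (Suc n) = [:1, 2 * real n:] * qshift n + [:0, 2, -2:] * pderiv (qshift n)"
  by (simp add: pshift_def qshift_def split: prod.split)
lemma pshift_0: "pshift 0 = 0" by (simp add: pshift_def)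
lemma qshift_0: "qshift 0 = 1" by (simp add: qshift_def)

definition P :: "nat \<Rightarrow> complex \<Rightarrow> complex" where "P n w = poly (mp (pshift n)) w"
definition Q :: "nat \<Rightarrow> complex \<Rightarrow> complex" where "Q n w = poly (mp (qshift n)) w"
definition P' :: "nat \<Rightarrow> complex \<Rightarrow> complex" where "P' n w = poly (pderiv (mp (pshift n))) w"
definition Q' :: "nat \<Rightarrow> complex \<Rightarrow> complex" where "Q' n w = poly (pderiv (mp (qshift n))) w"

lemma P_Suc: "P (Suc n) w = (2 + 2 * (of_nat n - 1) * w) * P n w + (2*w - 2*w^2) * P' n w + Q n w"
  by (simp add: P_def P'_def Q_def pshift_Suc mp_add mp_mult mp_pCons mp_pderiv mp_smult mp_uminus algebra_simps power2_eq_square)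
lemma Q_Suc: "Q (Suc n) w = (1 + 2 * of_nat n * w) * Q n w + (2*w - 2*w^2) * Q' n w"
  by (simp add: Q'_def Q_def qshift_Suc mp_add mp_mult mp_pCons mp_pderiv mp_smult mp_uminus algebra_simps power2_eq_square)
lemma P_deriv: "(P n has_field_derivative P' n w) (at w)"
  unfolding P_def P'_def by simp
lemma Q_deriv: "(Q n has_field_derivative Q' n w) (at w)"
  unfolding Q_def Q'_def by simp
lemma P_0: "P 0 w = 0" by (simp add: P_def pshift_0)
lemma Q_0: "Q 0 w = 1" by (simp add: Q_def qshift_0)
lemma P_real: "P n (of_real x) = of_real (poly (pshift n) x)" by (simp add: P_def poly_mp_real)



definition G :: "complex \<Rightarrow> complex \<Rightarrow> complex" where
  "G c w = csqrt w / csqrt (1 - w) * (Arcsin (csqrt w) - c)"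

lemma G_deriv:
  assumes "0 < Re w" "Re w < 1"
  shows "(G c has_field_derivative (G c w + w) / (2 * w * (1 - w))) (at w)"
proof -
  define s where "s = csqrt w"
  define r where "r = csqrt (1 - w)"
  have w1: "w \<notin> \<real>\<^sub>\<le>\<^sub>0" using assms by (auto simp: complex_nonpos_Reals_iff)
  have w2: "1 - w \<notin> \<real>\<^sub>\<le>\<^sub>0" using assms by (auto simp: complex_nonpos_Reals_iff)
  have s2: "s^2 = w" unfolding s_def by simp
  have r2: "r^2 = 1 - w" unfolding r_def by simp
  have w0: "w \<noteq> 0" using assms by auto
  have w10: "1 - w \<noteq> 0" using assms by auto
  have s0: "s \<noteq> 0" using s2 w0 by auto
  have r0: "r \<noteq> 0" using r2 w10 by auto
  have ds: "(csqrt has_field_derivative inverse (2 * s)) (at w)"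
    unfolding s_def by (rule has_field_derivative_csqrt[OF w1])
  have dr: "((\<lambda>w. csqrt (1 - w)) has_field_derivative (-1) / (2 * r)) (at w)"
    unfolding r_def using has_field_derivative_csqrt'[of "\<lambda>w. 1 - w" "-1" w UNIV] w2
    by (auto intro!: derivative_eq_intros)
  have arc: "Im s = 0 \<Longrightarrow> \<bar>Re s\<bar> < 1"
  proof -
    assume "Im s = 0"
    then have "w = of_real ((Re s)^2)" using s2 by (metis complex_is_Real_iff of_real_Re of_real_power)
    then have "(Re s)^2 < 1" using assms by simp
    then show "\<bar>Re s\<bar> < 1" by (simp add: abs_square_less_1)
  qed
  have cosA: "cos (Arcsin s) = r"
    unfolding r_def using cos_Arcsin[of s] csqrt_principal[of w] s2 unfolding s_def by auto
  have dA: "((\<lambda>w. Arcsin (csqrt w)) has_field_derivative inverse r * inverse (2 * s)) (at w)"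
  proof -
    have "(Arcsin has_field_derivative inverse r) (at (csqrt w))"
      using has_field_derivative_Arcsin[of s] arc cosA unfolding s_def by simp
    from DERIV_chain2[OF this ds] show ?thesis .
  qed
  have r0': "csqrt (1 - w) \<noteq> 0" using r0 r_def by simp
  note X = DERIV_mult[OF DERIV_divide[OF ds dr r0'] DERIV_diff[OF dA DERIV_const[of c]]]
  have eq: "G c = (\<lambda>x. csqrt x / csqrt (1 - x) * (Arcsin (csqrt x) - c))"
    by (rule ext) (simp add: G_def)
  have Gw: "G c w = s / r * (Arcsin s - c)" unfolding G_def s_def r_def ..
  have weq: "w = s * s" using s2 by (simp add: power2_eq_square)
  have rr: "r * r = 1 - s * s" using r2 weq by (simp add: power2_eq_square)
  have E: "(inverse (2 * s) * r - s * (- 1 / (2 * r))) / (r * r) * (Arcsin s - c) +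
      inverse r * inverse (2 * s) * (s / r) = (s / r * (Arcsin s - c) + w) / (2 * w * (1 - w))"
  proof -
    have w1: "1 - w = r * r" using rr weq by simp
    show ?thesis unfolding w1 unfolding weq using s0 r0 rr
      by (simp add: field_simps)
  qed
  show ?thesis unfolding eq
    apply (rule DERIV_cong[OF X])
    unfolding s_def[symmetric] r_def[symmetric] Gw[unfolded eq]
    using E by simp
qed



definition K :: "complex \<Rightarrow> nat \<Rightarrow> complex \<Rightarrow> complex" where
  "K c n w = (Q n w * G c w + w * P n w) / (1 - w)^n"

lemma pow_deriv: fixes w :: complex shows "w \<noteq> 1 \<Longrightarrow> ((\<lambda>w. (1 - w)^n) has_field_derivative - of_nat n * (1 - w)^n / (1 - w)) (at w)"
proof (cases n)
  case 0 then show ?thesis by simp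
next
  case (Suc m)
  assume "w \<noteq> 1"
  have "((\<lambda>w. (1 - w)^n) has_field_derivative of_nat n * ((0 - 1) * (1 - w)^(n - Suc 0))) (at w)"
    by (rule DERIV_power[OF DERIV_diff[OF DERIV_const DERIV_ident]])
  moreover have "of_nat n * ((0 - 1) * (1 - w)^(n - Suc 0)) = - of_nat n * (1 - w)^n / (1 - w)"
    using Suc \<open>w \<noteq> 1\<close> by (simp add: field_simps)
  ultimately show ?thesis by simp
qed

lemma alg: fixes w v u q q' g p p' k :: complex
  assumes "w \<noteq> 0" "v \<noteq> 0" "u \<noteq> 0" "v = 1 - w"
  shows "((q' * g + (g + w)/(2*w*(1-w)) * q + (1*p + p'*w)) * u - (q*g + w*p) * (- k * u / (1-w))) / (u*u)
     = (((1 + 2*k*w)*q + (2*w - 2*w\<^sup>2)*q')*g + w*((2 + 2*(k-1)*w)*p + (2*w-2*w\<^sup>2)*p' + q)) / ((1-w)*u) / (2*w)"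
proof -
  have h1: "2 * w - 2 * w\<^sup>2 = 2 * w * v" unfolding assms(4) by (simp add: algebra_simps power2_eq_square)
  have h2: "(2 + 2 * (k - 1) * w) = 2 * v + 2 * k * w" unfolding assms(4) by (simp add: algebra_simps)
  have h3: "1 - w = v" using assms(4) by simp
  show ?thesis unfolding h1 h2 h3 using assms(1-3) by (simp add: field_simps)
qed
lemma K_deriv:
  assumes "0 < Re w" "Re w < 1"
  shows "(K c n has_field_derivative K c (Suc n) w / (2 * w)) (at w)"
proof -
  have w0: "w \<noteq> 0" using assms by auto
  have w1: "w \<noteq> 1" using assms by auto
  have w10: "1 - w \<noteq> 0" using w1 by simp
  have u0: "(1 - w)^n \<noteq> 0" using w10 by simp
  note X = DERIV_divide[OF DERIV_add[OF DERIV_mult[OF Q_deriv G_deriv[OF assms]] DERIV_mult[OF DERIV_ident P_deriv]] pow_deriv[OF w1] u0]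
  have eq: "K c n = (\<lambda>w. (Q n w * G c w + w * P n w) / (1 - w)^n)"
    by (rule ext) (simp add: K_def)
  define u where "u = (1 - w)^n"
  define v where "v = 1 - w"
  have uS: "(1 - w)^Suc n = v * u" unfolding u_def v_def by simp
  have v0: "v \<noteq> 0" using w10 v_def by simp
  have u0': "u \<noteq> 0" using u0 u_def by simp
  have E: "((Q' n w * G c w + (G c w + w) / (2 * w * (1 - w)) * Q n w + (1 * P n w + P' n w * w)) * (1 - w)^n -
     (Q n w * G c w + w * P n w) * (- of_nat n * (1 - w)^n / (1 - w))) / ((1 - w)^n * (1 - w)^n) =
    (((1 + 2 * of_nat n * w) * Q n w + (2 * w - 2 * w\<^sup>2) * Q' n w) * G c w +
      w * ((2 + 2 * (of_nat n - 1) * w) * P n w + (2 * w - 2 * w\<^sup>2) * P' n w + Q n w)) / (1 - w)^Suc n / (2 * w)"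
    unfolding power_Suc by (rule alg[OF w0 w10 u0 refl])
  show ?thesis unfolding eq
    apply (rule DERIV_cong[OF X])
    unfolding K_def P_Suc Q_Suc
    by (rule E)
qed



theorem proposition3p3:
  fixes x :: real
  assumes "0 < x" and "x < 1"
  shows "\<exists>\<delta>>0. \<forall>t::real. \<bar>t\<bar> < \<delta> \<longrightarrow>
           (\<lambda>n. poly (pshift n) x * t ^ n / fact n) sums
             (exp ((1 - x) * t) * (arcsin (sqrt x * exp ((1 - x) * t)) - arcsin (sqrt x))
              / (sqrt x * sqrt (1 - x * exp (2 * (1 - x) * t))))"
proof -
  define xc where "xc = complex_of_real x"
  define a where "a = 1 - xc"
  define c where "c = Arcsin (csqrt xc)"
  define Y where "Y = (\<lambda>z. xc * exp (2 * a * z))"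
  define H where "H = (\<lambda>n z. a^n * K c n (Y z) / xc)"
  define \<rho> where "\<rho> = min x (1 - x)"
  have \<rho>0: "\<rho> > 0" using assms unfolding \<rho>_def by simp
  have xc0: "xc \<noteq> 0" using assms unfolding xc_def by simp
  have a0: "a \<noteq> 0" using assms unfolding a_def xc_def by (metis of_real_1 of_real_diff of_real_eq_0_iff right_minus_eq less_irrefl)
  have Y0: "Y 0 = xc" unfolding Y_def by simp
  have "isCont Y 0" unfolding Y_def by (intro continuous_intros)
  then obtain \<delta> where \<delta>0: "\<delta> > 0" and \<delta>: "\<And>z. dist z 0 < \<delta> \<Longrightarrow> dist (Y z) xc < \<rho>"
    unfolding continuous_at_eps_delta Y0 using \<rho>0 by blast
  have Yre: "0 < Re (Y z) \<and> Re (Y z) < 1" if "z \<in> ball 0 \<delta>" for z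
  proof -
    have "dist (Y z) xc < \<rho>" using \<delta> that by (simp add: dist_commute)
    then have "\<bar>Re (Y z) - x\<bar> < \<rho>"
      using abs_Re_le_cmod[of "Y z - xc"] unfolding dist_norm xc_def by simp
    then show ?thesis unfolding \<rho>_def by auto
  qed
  have dY: "(Y has_field_derivative Y z * (2 * a)) (at z)" for z
    unfolding Y_def by (auto intro!: derivative_eq_intros)
  have dH: "(H n has_field_derivative H (Suc n) z) (at z)" if "z \<in> ball 0 \<delta>" for n z
  proof -
    have Yz0: "Y z \<noteq> 0" unfolding Y_def using xc0 by simp
    have "((\<lambda>z. K c n (Y z)) has_field_derivative K c (Suc n) (Y z) / (2 * Y z) * (Y z * (2 * a))) (at z)"
      using DERIV_chain2[OF K_deriv[OF conjunct1[OF Yre[OF that]] conjunct2[OF Yre[OF that]]] dY] .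
    then have der: "((\<lambda>z. a^n * K c n (Y z) / xc) has_field_derivative
        a^n * (K c (Suc n) (Y z) / (2 * Y z) * (Y z * (2 * a))) / xc) (at z)"
      by (intro DERIV_cdivide DERIV_cmult)
    have eq: "a^n * (K c (Suc n) (Y z) / (2 * Y z) * (Y z * (2 * a))) / xc = a^Suc n * K c (Suc n) (Y z) / xc"
      using Yz0 by (simp add: field_simps)
    have Hn: "H n = (\<lambda>z. a^n * K c n (Y z) / xc)" unfolding H_def ..
    show ?thesis unfolding Hn using DERIV_cong[OF der eq] unfolding H_def .
  qed
  have dn: "(deriv ^^ n) (H 0) z = H n z" if "z \<in> ball 0 \<delta>" for n z
    using that
  proof (induction n arbitrary: z)
    case 0 then show ?case by simp
  next
    case (Suc n)
    have ev: "eventually (\<lambda>z. (deriv ^^ n) (H 0) z = H n z) (nhds z)"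
      using eventually_nhds_in_open[OF open_ball Suc.prems] by eventually_elim (rule Suc.IH)
    have "(deriv ^^ Suc n) (H 0) z = deriv ((deriv ^^ n) (H 0)) z" by simp
    also have "\<dots> = deriv (H n) z" by (rule deriv_cong_ev[OF ev refl])
    also have "\<dots> = H (Suc n) z" by (rule DERIV_imp_deriv[OF dH[OF Suc.prems]])
    finally show ?case .
  qed
  have hol: "H 0 holomorphic_on ball 0 \<delta>"
    unfolding holomorphic_on_open[OF open_ball] using dH by blast
  have G0: "G c xc = 0" unfolding G_def c_def by simp
  have Hn0: "H n 0 = of_real (poly (pshift n) x)" for n
  proof -
    have "(1 - xc)^n \<noteq> 0" "xc \<noteq> 1" using a0 unfolding a_def by simp_all
    then show ?thesis unfolding H_def K_def Y0 G0 a_def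
      using xc0 by (simp add: field_simps P_real[of n x, folded xc_def])
  qed
  show ?thesis
  proof (intro exI[of _ \<delta>] conjI allI impI \<delta>0)
    fix t :: real assume t: "\<bar>t\<bar> < \<delta>"
    have tb: "complex_of_real t \<in> ball 0 \<delta>" using t by simp
    have S: "(\<lambda>n. (deriv ^^ n) (H 0) 0 / fact n * (of_real t - 0)^n) sums H 0 (of_real t)"
      by (rule holomorphic_power_series[OF hol tb])
    have S2: "(\<lambda>n. complex_of_real (poly (pshift n) x * t ^ n / fact n)) sums H 0 (of_real t)"
    proof -
      have d0: "(deriv ^^ n) (H 0) 0 = of_real (poly (pshift n) x)" for n
        using dn[of 0 n] Hn0[of n] \<delta>0 by simp
      show ?thesis using S by (simp add: d0 field_simps)
    qed
    define y where "y = x * exp (2 * (1 - x) * t)"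
    have Yt: "Y (of_real t) = of_real y" unfolding Y_def y_def xc_def a_def by (simp flip: exp_of_real)
    have y01: "0 < y \<and> y < 1" using Yre[OF tb] unfolding Yt by simp
    have sy: "sqrt y = sqrt x * exp ((1 - x) * t)"
    proof -
      have "exp (2 * (1 - x) * t) = (exp ((1 - x) * t))^2"
        by (simp flip: exp_of_nat_mult add: mult.assoc)
      then show ?thesis unfolding y_def by (simp add: real_sqrt_mult)
    qed
    have sy1: "sqrt y \<le> 1" using y01 by simp
    have sx1: "sqrt x \<le> 1" using assms by simp
    have "H 0 (of_real t) = G c (of_real y) / xc" unfolding H_def K_def Yt by (simp add: Q_0 P_0)
    also have "\<dots> = of_real (sqrt y / sqrt (1 - y) * (arcsin (sqrt y) - arcsin (sqrt x)) / x)"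
    proof -
      have ay: "\<bar>sqrt y\<bar> \<le> 1" and ax: "\<bar>sqrt x\<bar> \<le> 1" using sy1 sx1 y01 assms by auto
      show ?thesis
      unfolding G_def c_def xc_def using y01 assms
      by (simp add: csqrt_of_real flip: of_real_arcsin[OF ay] of_real_arcsin[OF ax])
    qed
    also have "sqrt y / sqrt (1 - y) * (arcsin (sqrt y) - arcsin (sqrt x)) / x =
        exp ((1 - x) * t) * (arcsin (sqrt x * exp ((1 - x) * t)) - arcsin (sqrt x))
              / (sqrt x * sqrt (1 - x * exp (2 * (1 - x) * t)))"
    proof -
      have xx: "sqrt x * sqrt x = x" using assms by simp
      have r0: "sqrt x > 0" using assms by simp
      have s0: "sqrt (1 - y) > 0" using y01 by simp
      have gen: "\<And>r e s A :: real. r > 0 \<Longrightarrow> s > 0 \<Longrightarrow> r * e / s * A / (r * r) = e * A / (r * s)"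
        by (simp add: field_simps)
      show ?thesis unfolding sy unfolding y_def[symmetric]
        using gen[OF r0 s0, of "exp ((1 - x) * t)" "arcsin (sqrt x * exp ((1 - x) * t)) - arcsin (sqrt x)"]
        unfolding xx .
    qed
    finally have HR: "H 0 (of_real t) = of_real (exp ((1 - x) * t) * (arcsin (sqrt x * exp ((1 - x) * t)) - arcsin (sqrt x))
              / (sqrt x * sqrt (1 - x * exp (2 * (1 - x) * t))))" .
    show "(\<lambda>n. poly (pshift n) x * t ^ n / fact n) sums
             (exp ((1 - x) * t) * (arcsin (sqrt x * exp ((1 - x) * t)) - arcsin (sqrt x))
              / (sqrt x * sqrt (1 - x * exp (2 * (1 - x) * t))))"
      using S2[unfolded HR] by (simp only: sums_of_real_iff)
  qed
qed


end
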